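(* Let $\Omega$ be a set with exactly two elements, let $M=(\pi(\omega'\mid\omega))_{\omega,\omega'\in\Omega}$ be the transition matrix of an irreducible Markov chain on $\Omega$, let $r:\Omega\to\mathbb{R}$ and let $\delta\in[0,1)$. Then, in the advisor's decision problem described in the context, the greedy strategy $\sigma_*$ is optimal for every initial distribution $p_1\in\Delta(\Omega)$, i.e. its payoff from $p_1$ equals $V_\delta(p_1)$.
   Context: Identify each $\omega\in\Omega$ with a unit vector of $\mathbb{R}^\Omega$ and $\Delta(\Omega)$ (probability distributions on $\Omega$, the "beliefs") with the unit simplex. For $p\in\Delta(\Omega)$ let $\langle p,r\rangle=\sum_\omega p(\omega)r(\omega)$. The investment region is $I=\{p\in\Delta(\Omega):\langle p,r\rangle\ge 0\}$ and $J=\Delta(\Omega)\setminus I$. Let $\phi(q)=qM$ (row vector times matrix). For $p\in\Delta(\Omega)$, $\mathcal{S}(p)$ is the set of Borel probability measures on $\Delta(\Omega)$ with mean $p$ ("splittings at $p$"), and $\mu_p$ is the Dirac mass at $p$. The decision problem from $p_1$: at each stage $n\ge1$, at the current belief $p_n$, the advisor chooses $\mu\in\mathcal{S}(p_n)$ (possibly depending on the past), a posterior $q_n$ is drawn according to $\mu$, the stage payoff is $1$ if $q_n\in I$ and $0$ otherwise, and $p_{n+1}=\phi(q_n)$. A strategy is such a rule for choosing splittings; its payoff is $\mathbb{E}[(1-\delta)\sum_{n\ge1}\delta^{n-1}\mathbf{1}_{\{q_n\in I\}}]$, and $V_\delta(p_1)$ is the supremum (in fact maximum) of the payoff over strategies;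 a strategy is optimal at $p_1$ if it achieves $V_\delta(p_1)$. The greedy strategy $\sigma_*$ is stationary in the belief: at $p\in I$ it chooses $\mu_p$ (no information); at $p\in J$ it chooses a two-point splitting $p=a_Iq_I+a_Jq_J$ (posterior $q_I$ with probability $a_I$, $q_J$ with probability $a_J$) solving: maximize $a_I$ subject to $p=a_Iq_I+a_Jq_J$, $q_I\in I$, $q_J\in\Delta(\Omega)$, $a_I+a_J=1$, $a_I,a_J\ge0$. *)

theory Defs
  imports "HOL-Analysis.Analysis" "HOL-Probability.Probability"
begin

text \<open>States: a finite type 'w. Beliefs: vectors in real^'w lying in the unit beliefs.
  Transition matrix M with M$w$w' = pi(w' | w); phi(q) = q M (row vector times matrix).\<close>

definition beliefs :: "(real^'w::finite) set" where
  "beliefs = {p. (\<forall>w. 0 \<le> p$w) \<and> (\<Sum>w\<in>UNIV. p$w) = 1}"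

definition stochastic :: "real^'w::finite^'w \<Rightarrow> bool" where
  "stochastic M \<longleftrightarrow> (\<forall>i j. 0 \<le> M$i$j) \<and> (\<forall>i. (\<Sum>j\<in>UNIV. M$i$j) = 1)"

definition irreducible :: "real^'w::finite^'w \<Rightarrow> bool" where
  "irreducible M \<longleftrightarrow> (\<forall>i j. (i, j) \<in> {(a, b). 0 < M$a$b}\<^sup>*)"

definition phi :: "real^'w::finite^'w \<Rightarrow> real^'w \<Rightarrow> real^'w" where
  "phi M q = q v* M"

definition invest :: "real^'w::finite \<Rightarrow> (real^'w) set" where
  "invest r = {p \<in> beliefs. 0 \<le> p \<bullet> r}"

definition noinvest :: "real^'w::finite \<Rightarrow> (real^'w) set" where
  "noinvest r = beliefs - invest r"

definition splittings :: "(real^'w::finite) \<Rightarrow> (real^'w) measure set" where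
  "splittings p = {\<mu>. prob_space \<mu> \<and> sets \<mu> = sets borel \<and> emeasure \<mu> beliefs = 1
        \<and> integrable \<mu> (\<lambda>q. q) \<and> integral\<^sup>L \<mu> (\<lambda>q. q) = p}"

text \<open>Histories of past posteriors q_1..q_n (indices 0..n-1) as extensional functions.\<close>
abbreviation hist_space :: "nat \<Rightarrow> (nat \<Rightarrow> real^'w::finite) measure" where
  "hist_space n \<equiv> PiM {..<n} (\<lambda>_. borel)"

text \<open>Current belief at stage n+1 (index n) given history h.\<close>
definition belief :: "real^'w::finite^'w \<Rightarrow> real^'w \<Rightarrow> nat \<Rightarrow> (nat \<Rightarrow> real^'w) \<Rightarrow> real^'w" where
  "belief M p1 n h = (if n = 0 then p1 else phi M (h (n - 1)))"

definition is_strategy :: "real^'w::finite^'w \<Rightarrow> real^'w \<Rightarrow> (nat \<Rightarrow> (nat \<Rightarrow> real^'w) \<Rightarrow> (real^'w) measure) \<Rightarrow> bool" where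
  "is_strategy M p1 \<sigma> \<longleftrightarrow>
     (\<forall>n. \<sigma> n \<in> measurable (hist_space n) (subprob_algebra borel)) \<and>
     (\<forall>n h. h \<in> space (hist_space n) \<and> (\<forall>i<n. h i \<in> beliefs)
            \<longrightarrow> \<sigma> n h \<in> splittings (belief M p1 n h))"

text \<open>Expected discounted payoff of stages n+1, ..., n+N given history h of length n.\<close>
fun Wfin :: "real^'w::finite \<Rightarrow> real \<Rightarrow> (nat \<Rightarrow> (nat \<Rightarrow> real^'w) \<Rightarrow> (real^'w) measure)
              \<Rightarrow> nat \<Rightarrow> nat \<Rightarrow> (nat \<Rightarrow> real^'w) \<Rightarrow> ennreal" where
  "Wfin r \<delta> \<sigma> 0 n h = 0"
| "Wfin r \<delta> \<sigma> (Suc N) n h =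
     (\<integral>\<^sup>+ q. (ennreal ((1 - \<delta>) * \<delta> ^ n) * indicator (invest r) q
               + Wfin r \<delta> \<sigma> N (Suc n) (h(n := q))) \<partial>(\<sigma> n h))"

text \<open>Payoff E[(1-delta) sum_n delta^(n-1) 1{q_n in I}] (limit of finite horizons, monotone convergence).\<close>
definition payoff :: "real^'w::finite \<Rightarrow> real \<Rightarrow> (nat \<Rightarrow> (nat \<Rightarrow> real^'w) \<Rightarrow> (real^'w) measure) \<Rightarrow> ennreal" where
  "payoff r \<delta> \<sigma> = (SUP N. Wfin r \<delta> \<sigma> N 0 (\<lambda>_. undefined))"

definition value_fn :: "real^'w::finite^'w \<Rightarrow> real^'w \<Rightarrow> real \<Rightarrow> real^'w \<Rightarrow> ennreal" where
  "value_fn M r \<delta> p1 = (SUP \<sigma> \<in> {\<sigma>. is_strategy M p1 \<sigma>}. payoff r \<delta> \<sigma>)"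

definition two_point :: "real \<Rightarrow> real^'w::finite \<Rightarrow> real^'w \<Rightarrow> (real^'w) measure" where
  "two_point a qI qJ = distr (measure_pmf (bernoulli_pmf a)) borel (\<lambda>b. if b then qI else qJ)"

definition feasible_split :: "real^'w::finite \<Rightarrow> real^'w \<Rightarrow> real \<Rightarrow> real^'w \<Rightarrow> real^'w \<Rightarrow> bool" where
  "feasible_split r p a qI qJ \<longleftrightarrow> 0 \<le> a \<and> a \<le> 1 \<and> qI \<in> invest r \<and> qJ \<in> beliefs
      \<and> p = a *\<^sub>R qI + (1 - a) *\<^sub>R qJ"

definition greedy_splittings :: "real^'w::finite \<Rightarrow> real^'w \<Rightarrow> (real^'w) measure set" where
  "greedy_splittings r p = {two_point a qI qJ | a qI qJ. feasible_split r p a qI qJ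
      \<and> (\<forall>a' qI' qJ'. feasible_split r p a' qI' qJ' \<longrightarrow> a' \<le> a)}"

definition greedy_choice :: "real^'w::finite \<Rightarrow> (real^'w \<Rightarrow> (real^'w) measure) \<Rightarrow> bool" where
  "greedy_choice r G \<longleftrightarrow> (\<forall>p \<in> invest r. G p = return borel p)
      \<and> (\<forall>p \<in> noinvest r. G p \<in> greedy_splittings r p)"

text \<open>The stationary strategy induced by G (off the beliefs: irrelevant default).\<close>
definition greedy_strategy :: "real^'w::finite^'w \<Rightarrow> (real^'w \<Rightarrow> (real^'w) measure) \<Rightarrow> real^'w
      \<Rightarrow> nat \<Rightarrow> (nat \<Rightarrow> real^'w) \<Rightarrow> (real^'w) measure" where
  "greedy_strategy M G p1 n h =
     (let p = belief M p1 n h in if p \<in> beliefs then G p else return borel p)"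

end

theory Submission
  imports Defs
begin


definition Gop :: "real \<Rightarrow> real \<Rightarrow> real \<Rightarrow> real \<Rightarrow> (real \<Rightarrow> real) \<Rightarrow> real \<Rightarrow> real" where
  "Gop bt lm c d F x = (if c \<le> x then (1 - d) + d * F (bt + lm * x)
     else (1 - x / c) * (d * F bt) + (x / c) * ((1 - d) + d * F (bt + lm * c)))"

fun Wn :: "real \<Rightarrow> real \<Rightarrow> real \<Rightarrow> real \<Rightarrow> nat \<Rightarrow> real \<Rightarrow> real" where
  "Wn bt lm c d 0 = (\<lambda>x. 0)"
| "Wn bt lm c d (Suc n) = Gop bt lm c d (Wn bt lm c d n)"

definition Wl :: "real \<Rightarrow> real \<Rightarrow> real \<Rightarrow> real \<Rightarrow> real \<Rightarrow> real" where
  "Wl bt lm c d x = lim (\<lambda>n. Wn bt lm c d n x)"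

lemma aff_le: fixes u v p q x :: real
  assumes "p \<le> x" "x \<le> q" "u + v * p \<le> 0" "u + v * q \<le> 0" shows "u + v * x \<le> 0"
proof (cases "0 \<le> v")
  case True
  then have "v * x \<le> v * q" using assms by (intro mult_left_mono) auto
  then show ?thesis using assms by linarith
next
  case False
  then have "v * x \<le> v * p" using assms by (intro mult_left_mono_neg) auto
  then show ?thesis using assms by linarith
qed

locale gr1 =
  fixes bt lm c d :: real
  assumes bt0: "0 \<le> bt" and bt1: "bt \<le> 1" and bl0: "0 \<le> bt + lm" and bl1: "bt + lm \<le> 1"
    and lm0: "-1 \<le> lm" and lm1: "lm \<le> 1"
    and c1: "c \<le> 1" and d0: "0 \<le> d" and d1: "d < 1"
begin

lemma phi_in: "0 \<le> x \<Longrightarrow> x \<le> 1 \<Longrightarrow> 0 \<le> bt + lm * x \<and> bt + lm * x \<le> 1"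
proof -
  assume x: "0 \<le> x" "x \<le> 1"
  have e: "bt + lm * x = (1 - x) * bt + x * (bt + lm)" by (simp add: algebra_simps)
  have "0 \<le> (1 - x) * bt + x * (bt + lm)" using x bt0 bl0 by simp
  moreover have "(1 - x) * bt + x * (bt + lm) \<le> (1 - x) * 1 + x * 1"
    using x bt1 bl1 by (intro add_mono mult_left_mono) auto
  ultimately show ?thesis using e by simp
qed

lemma Gop_mono:
  assumes FH: "\<And>y. 0 \<le> y \<Longrightarrow> y \<le> 1 \<Longrightarrow> F y \<le> H y + e" and e: "0 \<le> e"
    and x: "0 \<le> x" "x \<le> 1"
  shows "Gop bt lm c d F x \<le> Gop bt lm c d H x + d * e"
proof (cases "c \<le> x")
  case True
  have "F (bt + lm * x) \<le> H (bt + lm * x) + e" using FH phi_in x by blast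
  then have "d * F (bt + lm * x) \<le> d * (H (bt + lm * x) + e)" using d0 by (rule mult_left_mono)
  then show ?thesis using True by (simp add: Gop_def algebra_simps)
next
  case False
  then have cpos: "0 < c" using x by linarith
  have t0: "0 \<le> x / c" and t1: "x / c \<le> 1" using False x cpos by auto
  have "F bt \<le> H bt + e" using FH[of bt] bt0 bt1 by simp
  then have h1: "d * F bt \<le> d * (H bt + e)" using d0 by (rule mult_left_mono)
  have "F (bt + lm * c) \<le> H (bt + lm * c) + e" using FH phi_in[of c] cpos c1 by auto
  then have h2: "d * F (bt + lm * c) \<le> d * (H (bt + lm * c) + e)" using d0 by (rule mult_left_mono)
  have "(1 - x / c) * (d * F bt) + (x / c) * ((1 - d) + d * F (bt + lm * c))
     \<le> (1 - x / c) * (d * (H bt + e)) + (x / c) * ((1 - d) + d * (H (bt + lm * c) + e))"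
  proof (rule add_mono)
    show "(1 - x / c) * (d * F bt) \<le> (1 - x / c) * (d * (H bt + e))" by (rule mult_left_mono[OF h1]) (use t1 in simp)
    have "(1 - d) + d * F (bt + lm * c) \<le> (1 - d) + d * (H (bt + lm * c) + e)" using h2 by simp
    then show "(x / c) * ((1 - d) + d * F (bt + lm * c)) \<le> (x / c) * ((1 - d) + d * (H (bt + lm * c) + e))"
      using t0 by (rule mult_left_mono)
  qed
  also have "\<dots> = (1 - x / c) * (d * H bt) + (x / c) * ((1 - d) + d * H (bt + lm * c)) + d * e"
    by (simp add: algebra_simps)
  finally show ?thesis using False by (simp add: Gop_def)
qed

lemma Wn_bounds: "0 \<le> x \<Longrightarrow> x \<le> 1 \<Longrightarrow> 0 \<le> Wn bt lm c d n x \<and> Wn bt lm c d n x \<le> 1 - d ^ n"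
proof (induction n arbitrary: x)
  case 0 then show ?case by simp
next
  case (Suc n)
  have ph: "\<And>y. 0 \<le> y \<Longrightarrow> y \<le> 1 \<Longrightarrow> 0 \<le> Wn bt lm c d n (bt + lm * y) \<and> Wn bt lm c d n (bt + lm * y) \<le> 1 - d ^ n"
    using Suc.IH phi_in by blast
  show ?case
  proof (cases "c \<le> x")
    case True
    have "0 \<le> Wn bt lm c d n (bt + lm * x)" "Wn bt lm c d n (bt + lm * x) \<le> 1 - d ^ n" using ph Suc.prems by auto
    then have "0 \<le> d * Wn bt lm c d n (bt + lm * x)" "d * Wn bt lm c d n (bt + lm * x) \<le> d * (1 - d ^ n)"
      using d0 by (auto intro: mult_left_mono)
    then show ?thesis using True d1 by (auto simp: algebra_simps Gop_def)
  next
    case False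
    then have cpos: "0 < c" using Suc.prems by linarith
    have t0: "0 \<le> x / c" and t1: "x / c \<le> 1" using False Suc.prems cpos by auto
    have b1: "0 \<le> Wn bt lm c d n bt" "Wn bt lm c d n bt \<le> 1 - d ^ n" using ph[of 0] by auto
    have b2: "0 \<le> Wn bt lm c d n (bt + lm * c)" "Wn bt lm c d n (bt + lm * c) \<le> 1 - d ^ n"
      using ph[of c] cpos c1 by auto
    define u where "u = d * Wn bt lm c d n bt"
    define v where "v = (1 - d) + d * Wn bt lm c d n (bt + lm * c)"
    have m1: "d * Wn bt lm c d n bt \<le> d * (1 - d ^ n)" using b1 d0 by (intro mult_left_mono) auto
    have m2: "d * Wn bt lm c d n (bt + lm * c) \<le> d * (1 - d ^ n)" using b2 d0 by (intro mult_left_mono) auto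
    have dn: "d * (1 - d ^ n) = d - d ^ Suc n" by (simp add: algebra_simps)
    have dsn: "d ^ Suc n \<le> 1" using power_le_one[of d "Suc n"] d0 d1 by simp
    have u: "0 \<le> u" "u \<le> 1 - d ^ Suc n" unfolding u_def using b1 d0 m1 dn d1 by auto
    have v: "0 \<le> v" "v \<le> 1 - d ^ Suc n" unfolding v_def using b2 d0 m2 dn d1 by auto
    have "Wn bt lm c d (Suc n) x = (1 - x / c) * u + (x / c) * v" using False by (simp add: u_def v_def Gop_def)
    moreover have "0 \<le> (1 - x / c) * u + (x / c) * v" using u v t0 t1
      by (intro add_nonneg_nonneg mult_nonneg_nonneg) auto
    moreover have "(1 - x / c) * u + (x / c) * v \<le> (1 - x / c) * (1 - d ^ Suc n) + (x / c) * (1 - d ^ Suc n)"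
      using u v t0 t1 by (intro add_mono mult_left_mono) auto
    ultimately show ?thesis by (simp add: algebra_simps)
  qed
qed

lemma Wn_mono: "0 \<le> x \<Longrightarrow> x \<le> 1 \<Longrightarrow> Wn bt lm c d n x \<le> Wn bt lm c d (Suc n) x"
proof (induction n arbitrary: x)
  case 0 then show ?case using Wn_bounds[of x 1] by simp
next
  case (Suc n)
  have "Gop bt lm c d (Wn bt lm c d n) x \<le> Gop bt lm c d (Wn bt lm c d (Suc n)) x + d * 0"
    by (rule Gop_mono) (use Suc in auto)
  then show ?case by simp
qed

lemma Wn_cauchy: "0 \<le> x \<Longrightarrow> x \<le> 1 \<Longrightarrow> Wn bt lm c d (n + k) x \<le> Wn bt lm c d n x + d ^ n"
proof (induction n arbitrary: x)
  case 0 then show ?case using Wn_bounds[of x k] zero_le_power[OF d0, of k] by simp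
next
  case (Suc n)
  have "Gop bt lm c d (Wn bt lm c d (n + k)) x \<le> Gop bt lm c d (Wn bt lm c d n) x + d * d ^ n"
    by (rule Gop_mono) (use Suc d0 in auto)
  then show ?case by simp
qed

lemma Wn_incseq: "0 \<le> x \<Longrightarrow> x \<le> 1 \<Longrightarrow> incseq (\<lambda>n. Wn bt lm c d n x)"
  by (rule incseq_SucI) (rule Wn_mono)

lemma Wn_conv: assumes "0 \<le> x" "x \<le> 1" shows "(\<lambda>n. Wn bt lm c d n x) \<longlonglongrightarrow> Wl bt lm c d x"
proof -
  have "Bseq (\<lambda>n. Wn bt lm c d n x)"
  proof (rule BseqI'[of _ 1])
    fix n
    have "1 - d ^ n \<le> 1" using d0 by simp
    then show "norm (Wn bt lm c d n x) \<le> 1" using Wn_bounds[OF assms, of n] by auto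
  qed
  moreover have "\<forall>m n. m \<le> n \<longrightarrow> Wn bt lm c d m x \<le> Wn bt lm c d n x"
    using Wn_incseq[OF assms] by (auto simp: incseq_def)
  ultimately have "convergent (\<lambda>n. Wn bt lm c d n x)" by (rule Bseq_mono_convergent)
  then show ?thesis unfolding Wl_def by (simp add: convergent_LIMSEQ_iff)
qed

lemma Wl_ge: "0 \<le> x \<Longrightarrow> x \<le> 1 \<Longrightarrow> Wn bt lm c d n x \<le> Wl bt lm c d x"
  using incseq_le[OF Wn_incseq Wn_conv] by blast

lemma Wl_le: assumes "0 \<le> x" "x \<le> 1" shows "Wl bt lm c d x \<le> Wn bt lm c d n x + d ^ n"
proof (rule LIMSEQ_le_const2[OF Wn_conv[OF assms]])
  show "\<exists>N. \<forall>m\<ge>N. Wn bt lm c d m x \<le> Wn bt lm c d n x + d ^ n"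
  proof (intro exI allI impI)
    fix m assume "n \<le> m"
    then have "m = n + (m - n)" by simp
    then show "Wn bt lm c d m x \<le> Wn bt lm c d n x + d ^ n"
      using Wn_cauchy[OF assms, of n "m - n"] by metis
  qed
qed

lemma Wl_bounds: assumes "0 \<le> x" "x \<le> 1" shows "0 \<le> Wl bt lm c d x \<and> Wl bt lm c d x \<le> 1"
proof
  show "0 \<le> Wl bt lm c d x" using Wl_ge[OF assms, of 0] by simp
  have "\<And>n. Wn bt lm c d n x \<le> 1" using Wn_bounds[OF assms] d0 by (smt (verit) zero_le_power)
  then show "Wl bt lm c d x \<le> 1" by (intro LIMSEQ_le_const2[OF Wn_conv[OF assms]]) auto
qed

lemma Wl_fix: assumes x: "0 \<le> x" "x \<le> 1" shows "Wl bt lm c d x = Gop bt lm c d (Wl bt lm c d) x"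
proof -
  have 1: "(\<lambda>n. Wn bt lm c d (Suc n) x) \<longlonglongrightarrow> Wl bt lm c d x"
    using Wn_conv[OF x] by (rule LIMSEQ_Suc)
  have 2: "(\<lambda>n. Wn bt lm c d (Suc n) x) \<longlonglongrightarrow> Gop bt lm c d (Wl bt lm c d) x"
  proof (cases "c \<le> x")
    case True
    have p: "0 \<le> bt + lm * x" "bt + lm * x \<le> 1" using phi_in x by auto
    show ?thesis using True
      by (simp add: Gop_def) (intro tendsto_intros Wn_conv p)
  next
    case False
    then have cpos: "0 < c" using x by linarith
    have p: "0 \<le> bt + lm * c" "bt + lm * c \<le> 1" using phi_in[of c] cpos c1 by auto
    show ?thesis using False cpos
      apply (simp add: Gop_def) apply (intro tendsto_intros Wn_conv p bt0 bt1) using cpos by auto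
  qed
  show ?thesis using LIMSEQ_unique[OF 1 2] .
qed

lemma Wl_inv: assumes S: "\<And>y. y \<in> S \<Longrightarrow> c \<le> y \<and> 0 \<le> y \<and> y \<le> 1 \<and> bt + lm * y \<in> S"
  and y: "y \<in> S" shows "Wl bt lm c d y = 1"
proof -
  have "\<And>y. y \<in> S \<Longrightarrow> Wn bt lm c d n y = 1 - d ^ n" for n
  proof (induction n)
    case 0 then show ?case by simp
  next
    case (Suc n)
    have s: "c \<le> y" "bt + lm * y \<in> S" using S[OF Suc.prems] by auto
    have "Wn bt lm c d n (bt + lm * y) = 1 - d ^ n" using Suc.IH[OF s(2)] .
    then have "Wn bt lm c d (Suc n) y = (1 - d) + d * (1 - d ^ n)" using s by (simp add: Gop_def)
    also have "\<dots> = 1 - d ^ Suc n" by (simp add: algebra_simps)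
    finally show ?case .
  qed
  then have "(\<lambda>n. Wn bt lm c d n y) = (\<lambda>n. 1 - d ^ n)" using y by auto
  moreover have "(\<lambda>n. 1 - d ^ n) \<longlonglongrightarrow> 1 - 0"
    using d0 d1 by (intro tendsto_intros LIMSEQ_power_zero) auto
  ultimately have "(\<lambda>n. Wn bt lm c d n y) \<longlonglongrightarrow> 1" by simp
  moreover have "(\<lambda>n. Wn bt lm c d n y) \<longlonglongrightarrow> Wl bt lm c d y" using Wn_conv S[OF y] by auto
  ultimately show ?thesis using LIMSEQ_unique by blast
qed


lemma Wn_SG: "0 \<le> x \<Longrightarrow> x \<le> 1 \<Longrightarrow> \<exists>m. \<forall>y::real. 0 \<le> y \<and> y \<le> 1 \<longrightarrow> Wn bt lm c d n y \<le> Wn bt lm c d n x + m * (y - x)"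
proof (induction n arbitrary: x)
  case 0 then show ?case by (intro exI[of _ 0]) simp
next
  case (Suc n)
  define h where "h y = d * Wn bt lm c d n (bt + lm * y)" for y
  have hSG: "\<exists>m. \<forall>y::real. 0 \<le> y \<and> y \<le> 1 \<longrightarrow> h y \<le> h z + m * (y - z)" if z: "0 \<le> z" "z \<le> 1" for z
  proof -
    obtain m where m: "\<And>y. 0 \<le> y \<Longrightarrow> y \<le> 1 \<Longrightarrow> Wn bt lm c d n y \<le> Wn bt lm c d n (bt + lm * z) + m * (y - (bt + lm * z))"
      using Suc.IH[of "bt + lm * z"] phi_in[OF z] by blast
    show ?thesis
    proof (intro exI[of _ "d * m * lm"] allI impI)
      fix y :: real assume y: "0 \<le> y \<and> y \<le> 1"
      have "Wn bt lm c d n (bt + lm * y) \<le> Wn bt lm c d n (bt + lm * z) + m * ((bt + lm * y) - (bt + lm * z))"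
        using m phi_in y by blast
      then have "d * Wn bt lm c d n (bt + lm * y) \<le> d * (Wn bt lm c d n (bt + lm * z) + m * ((bt + lm * y) - (bt + lm * z)))"
        using d0 by (rule mult_left_mono)
      then show "h y \<le> h z + d * m * lm * (y - z)" unfolding h_def by (simp add: algebra_simps)
    qed
  qed
  have W1: "Wn bt lm c d (Suc n) y = (if c \<le> y then (1 - d) + h y else (1 - y / c) * h 0 + (y / c) * ((1 - d) + h c))" for y
    by (simp add: Gop_def h_def)
  note Wn.simps(2)[simp del]
  show ?case
  proof (cases "0 < c")
    case False
    obtain m where m: "\<And>y. 0 \<le> y \<and> y \<le> 1 \<Longrightarrow> h y \<le> h x + m * (y - x)" using hSG[OF Suc.prems] by blast
    show ?thesis
    proof (intro exI[of _ m] allI impI)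
      fix y :: real assume y: "0 \<le> y \<and> y \<le> 1"
      then show "Wn bt lm c d (Suc n) y \<le> Wn bt lm c d (Suc n) x + m * (y - x)"
        using False Suc.prems m[OF y] W1[of y] W1[of x] y by (simp del: Wn.simps)
    qed
  next
    case True
    define s where "s = ((1 - d) + h c - h 0) / c"
    define l where "l y = h 0 + s * y" for y
    have cc: "0 \<le> c" "c \<le> 1" using True c1 by auto
    have up: "Wn bt lm c d (Suc n) y \<le> l y \<and> Wn bt lm c d (Suc n) y \<le> (1 - d) + h y \<and>
        (Wn bt lm c d (Suc n) y = l y \<or> Wn bt lm c d (Suc n) y = (1 - d) + h y)" if y: "0 \<le> y" "y \<le> 1" for y
    proof (cases "c \<le> y")
      case False
      have e1: "Wn bt lm c d (Suc n) y = l y" using False True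
        by (simp add: W1 l_def s_def field_simps)
      obtain m where m: "\<And>z::real. 0 \<le> z \<and> z \<le> 1 \<Longrightarrow> h z \<le> h y + m * (z - y)" using hSG[OF y] by blast
      define t where "t = y / c"
      have t: "0 \<le> t" "t \<le> 1" "t * c = y" using False True y by (auto simp: t_def)
      have i1: "(1 - t) * h 0 \<le> (1 - t) * (h y + m * (0 - y))" using m[of 0] t by (intro mult_left_mono) auto
      have i2: "t * h c \<le> t * (h y + m * (c - y))" using m[of c] t cc by (intro mult_left_mono) auto
      have "l y = (1 - t) * h 0 + t * ((1 - d) + h c)" using True by (simp add: l_def s_def t_def field_simps)
      also have "\<dots> \<le> (1 - t) * (h y + m * (0 - y)) + t * ((1 - d) + (h y + m * (c - y)))"
        using i1 i2 by (simp add: algebra_simps)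
      also have "\<dots> = h y + t * (1 - d) + m * (t * c - y)" by (simp add: algebra_simps)
      also have "\<dots> = h y + t * (1 - d)" using t by simp
      also have "\<dots> \<le> h y + (1 - d)" using t d1 by (simp add: mult_left_le_one_le)
      finally show ?thesis using e1 by simp
    next
      case ge: True
      have e1: "Wn bt lm c d (Suc n) y = (1 - d) + h y" using ge by (simp add: W1)
      obtain m where m: "\<And>z::real. 0 \<le> z \<and> z \<le> 1 \<Longrightarrow> h z \<le> h c + m * (z - c)" using hSG[OF cc] by blast
      have "h 0 \<le> h c + m * (0 - c)" using m[of 0] cc by auto
      then have "m * c \<le> (1 - d) + h c - h 0" using d1 by (simp add: algebra_simps)
      moreover have "s * c = (1 - d) + h c - h 0" using True by (simp add: s_def)
      ultimately have "m * c \<le> s * c" by simp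
      then have ms: "m \<le> s" using True by simp
      have "m * (y - c) \<le> s * (y - c)" using ms ge by (intro mult_right_mono) auto
      then have "h y \<le> h c + s * (y - c)" using m[of y] y by auto
      moreover have "l y = (1 - d) + h c + s * (y - c)" using True by (simp add: l_def s_def field_simps)
      ultimately show ?thesis using e1 by simp
    qed
    show ?thesis
    proof (cases "Wn bt lm c d (Suc n) x = l x")
      case True
      show ?thesis
      proof (intro exI[of _ s] allI impI)
        fix y :: real assume y: "0 \<le> y \<and> y \<le> 1"
        show "Wn bt lm c d (Suc n) y \<le> Wn bt lm c d (Suc n) x + s * (y - x)"
          using up[of y] y True by (simp add: l_def algebra_simps)
      qed
    next
      case False
      then have ex: "Wn bt lm c d (Suc n) x = (1 - d) + h x" using up[OF Suc.prems] by blast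
      obtain m where m: "\<And>z::real. 0 \<le> z \<and> z \<le> 1 \<Longrightarrow> h z \<le> h x + m * (z - x)" using hSG[OF Suc.prems] by blast
      show ?thesis
      proof (intro exI[of _ m] allI impI)
        fix y :: real assume y: "0 \<le> y \<and> y \<le> 1"
        show "Wn bt lm c d (Suc n) y \<le> Wn bt lm c d (Suc n) x + m * (y - x)"
          using up[of y] y ex m[OF y] by auto
      qed
    qed
  qed
qed



lemma Wl_D:
  assumes cpos: "0 < c" and x: "0 \<le> x" "x < c"
  shows "d * Wl bt lm c d (bt + lm * x) \<le> Wl bt lm c d x"
proof -
  define W where "W = Wl bt lm c d"
  define a where "a = d * W bt"
  define Wc where "Wc = (1 - d) + d * W (bt + lm * c)"
  define K where "K = (Wc - a) / c"
  have R1: "W y = (1 - d) + d * W (bt + lm * y)" if "c \<le> y" "y \<le> 1" for y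
    using Wl_fix[of y] that cpos by (simp add: W_def Gop_def)
  have L: "W y = a + K * y" if "0 \<le> y" "y \<le> c" for y
  proof (cases "y = c")
    case True
    then show ?thesis using R1[of c] c1 cpos by (simp add: K_def Wc_def)
  next
    case False
    then have "\<not> c \<le> y" using that by simp
    then have "W y = (1 - y / c) * a + (y / c) * Wc" using Wl_fix[of y] that c1 cpos
      by (simp add: W_def Gop_def a_def Wc_def)
    then show ?thesis using cpos by (simp add: K_def field_simps)
  qed
  have Wc: "W c = a + K * c" using L[of c] cpos by simp
  have Wb: "0 \<le> W y \<and> W y \<le> 1" if "0 \<le> y" "y \<le> 1" for y using Wl_bounds that by (simp add: W_def)
  have a0: "W 0 = a" using L[of 0] cpos by simp
  have Lx: "W x = a + K * x" using L[of x] x by simp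
  have px: "0 \<le> bt + lm * x" "bt + lm * x \<le> 1" using phi_in x cpos c1 by auto
  have pc: "0 \<le> bt + lm * c" "bt + lm * c \<le> 1" using phi_in[of c] cpos c1 by auto
  have E2: "a + K * c = (1 - d) + d * W (bt + lm * c)" using Wc R1[of c] c1 by simp
  have dd: "d * d * (lm * lm) \<le> 1"
  proof -
    have "\<bar>lm\<bar> \<le> 1" using lm0 lm1 by auto
    then have "\<bar>lm\<bar> * \<bar>lm\<bar> \<le> 1 * 1" by (intro mult_mono) auto
    then have l: "lm * lm \<le> 1" by (simp add: abs_mult[symmetric])
    have "d * d \<le> 1 * 1" using d0 d1 by (intro mult_mono) auto
    then have "d * d * (lm * lm) \<le> 1 * 1" using l d0 by (intro mult_mono) auto
    then show ?thesis by simp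
  qed
  have main: "d * W (bt + lm * x) \<le> W x"
  proof (cases "bt + lm * c < c")
    case phic: True
    show ?thesis
    proof (cases "bt \<le> c")
      case True
      have pxc: "bt + lm * x \<le> c"
      proof (cases "0 \<le> lm")
        case True then have "lm * x \<le> lm * c" using x by (intro mult_left_mono) auto
        then show ?thesis using phic by simp
      next
        case False then have "lm * x \<le> 0" using x by (simp add: mult_nonpos_nonneg)
        then show ?thesis using \<open>bt \<le> c\<close> by simp
      qed
      have Wbt: "W bt = a + K * bt" using L[of bt] True bt0 by simp
      have Wpc: "W (bt + lm * c) = a + K * (bt + lm * c)" using L pc phic by simp
      have Wpx: "W (bt + lm * x) = a + K * (bt + lm * x)" using L px pxc by simp
      have "(d * (a + K * bt) - a) + (d * K * lm - K) * x \<le> 0"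
      proof (rule aff_le[of 0 x c])
        show "(d * (a + K * bt) - a) + (d * K * lm - K) * 0 \<le> 0" using Wbt a_def by simp
        have "(d * (a + K * bt) - a) + (d * K * lm - K) * c = d * W (bt + lm * c) - (a + K * c)"
          using Wpc by (simp add: algebra_simps)
        also have "\<dots> = - (1 - d)" using E2 by simp
        finally show "(d * (a + K * bt) - a) + (d * K * lm - K) * c \<le> 0" using d1 by simp
      qed (use x in auto)
      moreover have "d * W (bt + lm * x) - W x = (d * (a + K * bt) - a) + (d * K * lm - K) * x"
        unfolding Wpx Lx by (simp add: algebra_simps)
      ultimately show ?thesis by simp
    next
      case False
      have lmneg: "lm < 0"
      proof (rule ccontr)
        assume "\<not> lm < 0" then have "0 \<le> lm * c" using cpos by simp
        then show False using phic False by simp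
      qed
      define x0 where "x0 = (c - bt) / lm"
      have x0pos: "0 \<le> x0" using lmneg False by (simp add: x0_def divide_nonpos_neg)
      have bx0: "bt + lm * x0 = c" using lmneg by (simp add: x0_def)
      define v where "v = bt + lm * c"
      define p where "p = bt + lm * bt"
      have pp: "0 \<le> p" "p \<le> 1" using phi_in[of bt] bt0 bt1 by (auto simp: p_def)
      have "lm * bt \<le> lm * c" using lmneg False by (intro mult_left_mono_neg) auto
      then have pc': "p < c" using phic by (simp add: p_def)
      have Wp: "W p = a + K * p" using L pp pc' by simp
      have Wv: "W v = a + K * v" using L pc phic by (simp add: v_def)
      have E1: "a = d * ((1 - d) + d * (a + K * p))" using R1[of bt] False bt1 Wp by (simp add: a_def p_def)
      have E2': "a + K * c = (1 - d) + d * (a + K * v)" using E2 Wv by (simp add: v_def)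
      define D where "D = (1 + d) * (c - d * v) + d * d * p"
      have "(1 + d) * ((a + K * c) - ((1 - d) + d * (a + K * v))) - (a - d * ((1 - d) + d * (a + K * p)))
          = K * D - (1 - d)" by (simp add: D_def algebra_simps)
      then have KD: "K * D = 1 - d" using E1 E2' by simp
      have v0: "0 \<le> v" using pc by (simp add: v_def)
      have "d * v \<le> v" using v0 d1 by (simp add: mult_left_le_one_le d0)
      then have "0 < c - d * v" using phic by (simp add: v_def)
      then have Dpos: "0 < D" using d0 pp unfolding D_def
        by (intro add_pos_nonneg mult_pos_pos mult_nonneg_nonneg) auto
      have "K = (1 - d) / D" using KD Dpos by (simp add: field_simps)
      then have K0: "0 \<le> K" using Dpos d1 by simp
      have cb: "c - bt = lm * x0" using bx0 by simp
      have "v - p = lm * (c - bt)" by (simp add: v_def p_def algebra_simps)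
      then have vp: "v - p = lm * lm * x0" using cb by simp
      have "a + K * x0 - d * (a + K * c) = ((1 - d) - K * (c - d * v)) + K * x0 - d * K * c"
        using E2' by (simp add: algebra_simps)
      also have "\<dots> = K * (D - (c - d * v) + x0 - d * c)" using KD by (simp add: algebra_simps)
      also have "\<dots> = K * (x0 - d * d * (v - p))" by (simp add: D_def algebra_simps)
      also have "\<dots> = K * (x0 - d * d * (lm * lm) * x0)" using vp by (simp add: algebra_simps)
      also have "\<dots> \<ge> 0"
      proof -
        have "d * d * (lm * lm) * x0 \<le> 1 * x0" using dd x0pos by (rule mult_right_mono)
        then show ?thesis using K0 by simp
      qed
      finally have KEY: "d * (a + K * c) - a - K * x0 \<le> 0" by simp
      show ?thesis
      proof (cases "x0 \<le> x")
        case True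
        have "lm * x \<le> lm * x0" using True lmneg by (intro mult_left_mono_neg) auto
        then have pxc: "bt + lm * x \<le> c" using bx0 by simp
        have Wpx: "W (bt + lm * x) = a + K * (bt + lm * x)" using L px pxc by simp
        have "(d * (a + K * bt) - a) + (d * K * lm - K) * x \<le> 0"
        proof (rule aff_le[of x0 x c])
          have "(d * (a + K * bt) - a) + (d * K * lm - K) * x0 = d * (a + K * (bt + lm * x0)) - a - K * x0"
            by (simp add: algebra_simps)
          then show "(d * (a + K * bt) - a) + (d * K * lm - K) * x0 \<le> 0" using KEY bx0 by simp
          have "(d * (a + K * bt) - a) + (d * K * lm - K) * c = d * (a + K * v) - (a + K * c)"
            by (simp add: v_def algebra_simps)
          also have "\<dots> = - (1 - d)" using E2' by simp
          finally show "(d * (a + K * bt) - a) + (d * K * lm - K) * c \<le> 0" using d1 by simp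
        qed (use True x in auto)
        moreover have "d * W (bt + lm * x) - W x = (d * (a + K * bt) - a) + (d * K * lm - K) * x"
          unfolding Wpx Lx by (simp add: algebra_simps)
        ultimately show ?thesis by simp
      next
        case lt: False
        have "lm * x0 < lm * x" using lt lmneg by simp
        then have pxc: "c < bt + lm * x" using bx0 by simp
        have "lm * (bt + lm * x) \<le> lm * c" using pxc lmneg by (intro mult_left_mono_neg) auto
        then have ppx: "bt + lm * (bt + lm * x) < c" using phic by simp
        have ppx0: "0 \<le> bt + lm * (bt + lm * x)" using phi_in px by simp
        have Wpx: "W (bt + lm * x) = (1 - d) + d * (a + K * (bt + lm * (bt + lm * x)))"
          using R1[of "bt + lm * x"] pxc px L[of "bt + lm * (bt + lm * x)"] ppx ppx0 by simp
        have "(d * ((1 - d) + d * (a + K * p)) - a) + (d * d * K * (lm * lm) - K) * x \<le> 0"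
        proof (rule aff_le[of 0 x x0])
          show "(d * ((1 - d) + d * (a + K * p)) - a) + (d * d * K * (lm * lm) - K) * 0 \<le> 0" using E1 by simp
          have "(d * ((1 - d) + d * (a + K * p)) - a) + (d * d * K * (lm * lm) - K) * x0
             = d * ((1 - d) + d * (a + K * (bt + lm * (bt + lm * x0)))) - a - K * x0"
            by (simp add: p_def algebra_simps)
          also have "\<dots> = d * (a + K * c) - a - K * x0" using bx0 E2' by (simp add: v_def)
          finally show "(d * ((1 - d) + d * (a + K * p)) - a) + (d * d * K * (lm * lm) - K) * x0 \<le> 0"
            using KEY by simp
        qed (use lt x in auto)
        moreover have "d * W (bt + lm * x) - W x = (d * ((1 - d) + d * (a + K * p)) - a) + (d * d * K * (lm * lm) - K) * x"
          unfolding Wpx Lx by (simp add: p_def algebra_simps)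
        ultimately show ?thesis by simp
      qed
    qed
  next
    case phic: False
    then have phic: "c \<le> bt + lm * c" by simp
    show ?thesis
    proof (cases "0 \<le> lm")
      case lmpos: True
      have one: "W y = 1" if "c \<le> y" "y \<le> 1" for y
        unfolding W_def
      proof (rule Wl_inv[of "{y. c \<le> y \<and> y \<le> 1}"])
        fix z assume "z \<in> {y. c \<le> y \<and> y \<le> 1}"
        then have z: "c \<le> z" "z \<le> 1" by auto
        have "lm * c \<le> lm * z" using z lmpos by (intro mult_left_mono) auto
        then show "c \<le> z \<and> 0 \<le> z \<and> z \<le> 1 \<and> bt + lm * z \<in> {y. c \<le> y \<and> y \<le> 1}"
          using z phic phi_in[of z] cpos by auto
      qed (use that in auto)
      have ac: "a + K * c = 1" using one[of c] Wc c1 by simp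
      have "a \<le> 1" using Wb[of 0] a0 by simp
      then have "0 \<le> K * c" using ac by simp
      then have K0: "0 \<le> K" using cpos by (simp add: zero_le_mult_iff)
      have Wpx1: "d * W (bt + lm * x) \<le> d" using Wb[OF px] d0 by (simp add: mult_left_le)
      show ?thesis
      proof (cases "c \<le> bt")
        case True
        have "a = d" using one[of bt] True bt1 by (simp add: a_def)
        moreover have "0 \<le> K * x" using K0 x by simp
        ultimately show ?thesis using Wpx1 L[of x] x by simp
      next
        case False
        have lmp: "0 < lm"
        proof (rule ccontr)
          assume "\<not> 0 < lm" then have "lm = 0" using lmpos by simp
          then show False using phic False by simp
        qed
        define x0 where "x0 = (c - bt) / lm"
        have x0pos: "0 \<le> x0" using lmp False by (simp add: x0_def)
        have bx0: "bt + lm * x0 = c" using lmp by (simp add: x0_def)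
        have Wbt: "W bt = a + K * bt" using L[of bt] False bt0 by simp
        have E1: "a = d * (a + K * bt)" using Wbt by (simp add: a_def)
        have "(1 - d) * (a + K * c) = K * (c * (1 - d) + d * bt)" using E1 by (simp add: algebra_simps)
        then have KD: "K * (c * (1 - d) + d * bt) = 1 - d" using ac by simp
        have cb: "c - bt = lm * x0" using bx0 by simp
        have "d * lm \<le> 1 * 1" using d0 d1 lmpos lm1 by (intro mult_mono) auto
        then have dl: "d * lm \<le> 1" by simp
        have "a + K * x0 - d = (1 - d) - K * (c - x0)" using ac by (simp add: algebra_simps)
        also have "\<dots> = K * (x0 - d * (c - bt))" using KD by (simp add: algebra_simps)
        also have "\<dots> = K * (x0 - d * lm * x0)" using cb by (simp add: algebra_simps)
        also have "\<dots> \<ge> 0"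
        proof -
          have "d * lm * x0 \<le> 1 * x0" using dl x0pos by (rule mult_right_mono)
          then show ?thesis using K0 by simp
        qed
        finally have KEY: "d \<le> a + K * x0" by simp
        show ?thesis
        proof (cases "x0 \<le> x")
          case True
          have "K * x0 \<le> K * x" using K0 True by (intro mult_left_mono) auto
          then show ?thesis using Wpx1 KEY L[of x] x by simp
        next
          case lt: False
          have "lm * x < lm * x0" using lt lmp by simp
          then have pxc: "bt + lm * x \<le> c" using bx0 by simp
          have Wpx: "W (bt + lm * x) = a + K * (bt + lm * x)" using L px pxc by simp
          have "(d * (a + K * bt) - a) + (d * K * lm - K) * x \<le> 0"
          proof (rule aff_le[of 0 x x0])
            show "(d * (a + K * bt) - a) + (d * K * lm - K) * 0 \<le> 0" using E1 by simp
            have "(d * (a + K * bt) - a) + (d * K * lm - K) * x0 = d * (a + K * (bt + lm * x0)) - a - K * x0"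
              by (simp add: algebra_simps)
            also have "\<dots> = d - a - K * x0" using bx0 ac by simp
            finally show "(d * (a + K * bt) - a) + (d * K * lm - K) * x0 \<le> 0" using KEY by simp
          qed (use lt x in auto)
          moreover have "d * W (bt + lm * x) - W x = (d * (a + K * bt) - a) + (d * K * lm - K) * x"
            unfolding Wpx Lx by (simp add: algebra_simps)
          ultimately show ?thesis by simp
        qed
      qed
    next
      case lmneg: False
      then have lmneg: "lm < 0" by simp
      define c1' where "c1' = (c - bt) / lm"
      have bc1: "bt + lm * c1' = c" using lmneg by (simp add: c1'_def)
      have cc1: "c \<le> c1'" using lmneg phic by (simp add: c1'_def pos_le_divide_eq neg_le_divide_eq algebra_simps)
      have "bt * (1 + lm) \<ge> c * (1 - lm) * (1 + lm)" using phic lm0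
        by (intro mult_right_mono) (auto simp: algebra_simps)
      then have "lm * (bt + lm * c) \<ge> c - bt" by (simp add: algebra_simps)
      then have pcc1: "bt + lm * c \<le> c1'" using lmneg by (simp add: c1'_def neg_le_divide_eq algebra_simps)
      define S where "S = {y. c \<le> y \<and> y \<le> 1 \<and> y \<le> c1'}"
      have one: "W y = 1" if "y \<in> S" for y
        unfolding W_def
      proof (rule Wl_inv[of S])
        fix z assume "z \<in> S"
        then have z: "c \<le> z" "z \<le> 1" "z \<le> c1'" by (auto simp: S_def)
        have "lm * c1' \<le> lm * z" using z lmneg by (intro mult_left_mono_neg) auto
        then have "c \<le> bt + lm * z" using bc1 by simp
        moreover have "lm * z \<le> lm * c" using z lmneg by (intro mult_left_mono_neg) auto
        ultimately show "c \<le> z \<and> 0 \<le> z \<and> z \<le> 1 \<and> bt + lm * z \<in> S"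
          using z phi_in[of z] cpos pcc1 by (auto simp: S_def)
      qed (use that in auto)
      have ac: "a + K * c = 1" using one[of c] Wc c1 cc1 by (simp add: S_def)
      have "a \<le> 1" using Wb[of 0] a0 by simp
      then have "0 \<le> K * c" using ac by simp
      then have K0: "0 \<le> K" using cpos by (simp add: zero_le_mult_iff)
      have Wpx1: "d * W (bt + lm * x) \<le> d" using Wb[OF px] d0 by (simp add: mult_left_le)
      have "lm * c \<le> 0" using lmneg cpos by (simp add: mult_neg_pos less_imp_le)
      then have btc: "c \<le> bt" using phic by simp
      show ?thesis
      proof (cases "bt \<le> c1'")
        case True
        have "a = d" using one[of bt] True bt1 btc by (simp add: a_def S_def)
        moreover have "0 \<le> K * x" using K0 x by simp
        ultimately show ?thesis using Wpx1 L[of x] x by simp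
      next
        case False
        define x1 where "x1 = (c1' - bt) / lm"
        have x1pos: "0 \<le> x1" using lmneg False by (simp add: x1_def divide_nonpos_neg)
        have bx1: "bt + lm * x1 = c1'" using lmneg by (simp add: x1_def)
        define p where "p = bt + lm * bt"
        have pp: "0 \<le> p" "p \<le> 1" using phi_in[of bt] bt0 bt1 by (auto simp: p_def)
        have "lm * bt < lm * c1'" using lmneg False by simp
        then have pc': "p < c" using bc1 by (simp add: p_def)
        have Wp: "W p = a + K * p" using L pp pc' by simp
        have E1: "a = d * ((1 - d) + d * (a + K * p))" using R1[of bt] btc bt1 Wp by (simp add: a_def p_def)
        have "(1 - d) = K * (c - d * d * (c - p))"
        proof -
          have "a = 1 - K * c" using ac by simp
          then have h: "1 - K * c = d * ((1 - d) + d * (1 - K * c + K * p))" using E1 by simp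
          have "(1 - K * c) - d * ((1 - d) + d * (1 - K * c + K * p)) = (1 - d) - K * (c - d * d * (c - p))"
            by (simp add: algebra_simps)
          then show ?thesis using h by simp
        qed
        then have KD: "K * (c - d * d * (c - p)) = 1 - d" by simp
        have cp: "c - p = lm * lm * x1"
        proof -
          have e: "lm * x1 = c1' - bt" using bx1 by simp
          have "lm * lm * x1 = lm * (lm * x1)" by simp
          also have "\<dots> = lm * (c1' - bt)" using e by simp
          also have "\<dots> = c - bt - lm * bt" using bc1 by (simp add: algebra_simps)
          finally show ?thesis by (simp add: p_def)
        qed
        have "a + K * x1 - d = (1 - d) - K * (c - x1)" using ac by (simp add: algebra_simps)
        also have "\<dots> = K * (x1 - d * d * (c - p))" using KD by (simp add: algebra_simps)
        also have "\<dots> = K * (x1 - d * d * (lm * lm) * x1)" using cp by (simp add: algebra_simps)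
        also have "\<dots> \<ge> 0"
      proof -
        have "d * d * (lm * lm) * x1 \<le> 1 * x1" using dd x1pos by (rule mult_right_mono)
        then show ?thesis using K0 by simp
      qed
        finally have KEY: "d \<le> a + K * x1" by simp
        show ?thesis
        proof (cases "x1 \<le> x")
          case True
          have "K * x1 \<le> K * x" using K0 True by (intro mult_left_mono) auto
          then show ?thesis using Wpx1 KEY L[of x] x by simp
        next
          case lt: False
          have "lm * x1 < lm * x" using lt lmneg by simp
          then have pxc: "c1' < bt + lm * x" using bx1 by simp
          have "lm * (bt + lm * x) < lm * c1'" using pxc lmneg by simp
          then have ppx: "bt + lm * (bt + lm * x) < c" using bc1 by simp
          have ppx0: "0 \<le> bt + lm * (bt + lm * x)" using phi_in px by simp
          have Wpx: "W (bt + lm * x) = (1 - d) + d * (a + K * (bt + lm * (bt + lm * x)))"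
            using R1[of "bt + lm * x"] pxc cc1 px L[of "bt + lm * (bt + lm * x)"] ppx ppx0 by simp
          have "(d * ((1 - d) + d * (a + K * p)) - a) + (d * d * K * (lm * lm) - K) * x \<le> 0"
          proof (rule aff_le[of 0 x x1])
            show "(d * ((1 - d) + d * (a + K * p)) - a) + (d * d * K * (lm * lm) - K) * 0 \<le> 0" using E1 by simp
            have "(d * ((1 - d) + d * (a + K * p)) - a) + (d * d * K * (lm * lm) - K) * x1
               = d * ((1 - d) + d * (a + K * (bt + lm * (bt + lm * x1)))) - a - K * x1"
              by (simp add: p_def algebra_simps)
            also have "\<dots> = d - a - K * x1" using bx1 bc1 ac by (simp add: algebra_simps)
            finally show "(d * ((1 - d) + d * (a + K * p)) - a) + (d * d * K * (lm * lm) - K) * x1 \<le> 0"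
              using KEY by simp
          qed (use lt x in auto)
          moreover have "d * W (bt + lm * x) - W x = (d * ((1 - d) + d * (a + K * p)) - a) + (d * d * K * (lm * lm) - K) * x"
            unfolding Wpx Lx by (simp add: p_def algebra_simps)
          ultimately show ?thesis by simp
        qed
      qed
    qed
  qed
  then show ?thesis by (simp add: W_def)
qed


lemma Wl_bell: assumes x: "0 \<le> x" "x \<le> 1"
  shows "(if c \<le> x then 1 - d else 0) + d * Wl bt lm c d (bt + lm * x) \<le> Wl bt lm c d x"
proof (cases "c \<le> x")
  case True then show ?thesis using Wl_fix[OF x] by (simp add: Gop_def)
next
  case False
  then have "0 < c" using x by linarith
  then show ?thesis using Wl_D[of x] False x by simp
qed

lemma Wl_aSG: assumes x: "0 \<le> x" "x \<le> 1"
  shows "\<exists>m. \<forall>y. 0 \<le> y \<and> y \<le> 1 \<longrightarrow> Wl bt lm c d y \<le> Wl bt lm c d x + m * (y - x) + d ^ n"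
proof -
  obtain m where m: "\<And>y. 0 \<le> y \<and> y \<le> 1 \<Longrightarrow> Wn bt lm c d n y \<le> Wn bt lm c d n x + m * (y - x)"
    using Wn_SG[OF x, of n] by blast
  show ?thesis
  proof (intro exI[of _ m] allI impI)
    fix y :: real assume y: "0 \<le> y \<and> y \<le> 1"
    show "Wl bt lm c d y \<le> Wl bt lm c d x + m * (y - x) + d ^ n"
      using Wl_le[of y n] y m[OF y] Wl_ge[OF x, of n] by simp
  qed
qed

end


lemma tp_sets[simp]: "sets (two_point a u v) = sets borel"
  by (simp add: two_point_def)

lemma tp_space[simp]: "space (two_point a u v) = UNIV"
  by (simp add: two_point_def)

lemma tp_gmeas: "(\<lambda>b::bool. if b then u else v) \<in> measure_pmf P \<rightarrow>\<^sub>M (borel :: ('a::topological_space) measure)"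
  by simp

lemma tp_prob: "prob_space (two_point a u v)"
  unfolding two_point_def by (rule measure_pmf.prob_space_distr) simp

lemma tp_emeasure:
  assumes a: "0 \<le> a" "a \<le> 1" and A: "A \<in> sets borel"
  shows "emeasure (two_point a u v) A = ennreal a * indicator A u + ennreal (1 - a) * indicator A v"
proof -
  have "emeasure (two_point a u v) A = emeasure (measure_pmf (bernoulli_pmf a)) ((\<lambda>b. if b then u else v) -` A)"
    unfolding two_point_def using A by (subst emeasure_distr) auto
  also have "\<dots> = (\<integral>\<^sup>+ b. indicator ((\<lambda>b. if b then u else v) -` A) b \<partial>measure_pmf (bernoulli_pmf a))"
    by (subst nn_integral_indicator) auto
  also have "\<dots> = indicator A u * ennreal a + indicator A v * ennreal (1 - a)"
    using a by (subst nn_integral_bernoulli_pmf) (auto simp: indicator_def)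
  finally show ?thesis by (simp add: mult.commute)
qed

lemma tp_nn:
  assumes a: "0 \<le> a" "a \<le> 1"
  shows "(\<integral>\<^sup>+ q. F q \<partial>two_point a u v) = ennreal a * F u + ennreal (1 - a) * F v"
proof -
  define S where "S q = F u * indicator {u} q + F v * indicator ({v} - {u}) q" for q
  have "emeasure (two_point a u v) {u, v} = ennreal a + ennreal (1 - a)"
    using a by (subst tp_emeasure) auto
  also have "\<dots> = 1" using a by (simp add: ennreal_plus[symmetric] del: ennreal_plus)
  finally have "Sigma_Algebra.measure (two_point a u v) {u, v} = 1" by (simp add: measure_def)
  then have "AE q in two_point a u v. q \<in> {u, v}" by (rule prob_space.AE_prob_1[OF tp_prob])
  then have "AE q in two_point a u v. F q = S q" by eventually_elim (cases "u = v"; auto simp: S_def indicator_def)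
  then have "(\<integral>\<^sup>+ q. F q \<partial>two_point a u v) = (\<integral>\<^sup>+ q. S q \<partial>two_point a u v)" by (rule nn_integral_cong_AE)
  also have "\<dots> = (\<integral>\<^sup>+ b. S (if b then u else v) \<partial>measure_pmf (bernoulli_pmf a))"
  proof -
    have u: "{u} \<in> sets borel" and uv: "{v} - {u} \<in> sets borel" by auto
    have "S \<in> borel_measurable borel" unfolding S_def using u uv by measurable
    then show ?thesis unfolding two_point_def by (subst nn_integral_distr) auto
  qed
  also have "\<dots> = S u * ennreal a + S v * ennreal (1 - a)"
    using a by (subst nn_integral_bernoulli_pmf) auto
  also have "\<dots> = ennreal a * F u + ennreal (1 - a) * F v"
    by (cases "u = v") (auto simp: S_def mult.commute)
  finally show ?thesis .
qed

lemma tp_int: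
  fixes f :: "real^'w::finite \<Rightarrow> 'b::{banach, second_countable_topology}"
  assumes a: "0 \<le> a" "a \<le> 1" and f: "f \<in> borel_measurable borel"
  shows "integrable (two_point a u v) f \<and> integral\<^sup>L (two_point a u v) f = a *\<^sub>R f u + (1 - a) *\<^sub>R f v"
proof
  have fin: "finite (set_pmf (bernoulli_pmf a))" by (rule finite_subset[of _ UNIV]) auto
  show "integrable (two_point a u v) f"
    unfolding two_point_def using f by (subst integrable_distr_eq) (auto intro: integrable_measure_pmf_finite[OF fin])
  have "integral\<^sup>L (two_point a u v) f = (LINT b|measure_pmf (bernoulli_pmf a). f (if b then u else v))"
    unfolding two_point_def using f by (subst integral_distr) auto
  also have "\<dots> = (\<Sum>b\<in>UNIV. pmf (bernoulli_pmf a) b *\<^sub>R f (if b then u else v))"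
    by (rule integral_measure_pmf) auto
  also have "\<dots> = a *\<^sub>R f u + (1 - a) *\<^sub>R f v"
    using a by (simp add: UNIV_bool bernoulli_pmf.rep_eq)
  finally show "integral\<^sup>L (two_point a u v) f = a *\<^sub>R f u + (1 - a) *\<^sub>R f v" .
qed

lemma tp_return:
  assumes a: "0 \<le> a" "a \<le> 1"
  shows "return borel p = two_point a p p"
proof (rule measure_eqI)
  show "sets (return borel p) = sets (two_point a p p)" by simp
  fix A assume "A \<in> sets (return borel p)"
  then have A: "A \<in> sets borel" by simp
  have "ennreal a * indicator A p + ennreal (1 - a) * indicator A p = (ennreal a + ennreal (1 - a)) * indicator A p"
    by (simp add: distrib_right)
  also have "\<dots> = indicator A p" using a by (simp add: ennreal_plus[symmetric] del: ennreal_plus)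
  finally show "emeasure (return borel p) A = emeasure (two_point a p p) A"
    using A a by (simp add: tp_emeasure emeasure_return)
qed


lemma tp_zero: "two_point 0 u v = two_point 0 u' v"
  by (rule measure_eqI) (auto simp: tp_emeasure)

lemma beliefs_closed: "closed (beliefs :: (real^'w::finite) set)"
  unfolding beliefs_def
  by (intro closed_Collect_all closed_Collect_conj closed_Collect_le closed_Collect_eq continuous_intros)

lemma beliefs_borel[measurable]: "(beliefs :: (real^'w::finite) set) \<in> sets borel"
  using beliefs_closed by (rule borel_closed)

lemma phi_meas[measurable]: "phi M \<in> borel_measurable borel"
proof -
  have e: "phi M = (*v) (transpose M)" by (rule ext) (simp add: phi_def transpose_matrix_vector)
  show ?thesis unfolding e by (rule borel_measurable_continuous_onI[OF matrix_vector_mult_linear_continuous_on])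
qed


locale vs =
  fixes M :: "real^'w::finite^'w" and r :: "real^'w" and dl :: real
    and G :: "real^'w \<Rightarrow> (real^'w) measure" and e1 e2 :: 'w
  assumes e12: "e1 \<noteq> e2" and univ: "(UNIV :: 'w set) = {e1, e2}" and r12: "r$e2 \<le> r$e1"
    and stoch: "stochastic M" and d0: "0 \<le> dl" and d1: "dl < 1" and gc: "greedy_choice r G"
begin

definition "bt = M$e2$e1"
definition "lm = M$e1$e1 - M$e2$e1"
definition "cc = (if r$e1 = r$e2 then (if 0 \<le> r$e2 then 0 else 2) else - r$e2 / (r$e1 - r$e2))"
definition "pt y = (\<chi> w. if w = e1 then y else 1 - y)"

lemma sum2: "(\<Sum>w\<in>UNIV. f w) = f e1 + f e2"
proof -
  have "(\<Sum>w\<in>UNIV. f w) = (\<Sum>w\<in>{e1, e2}. f w)" by (simp only: univ[symmetric])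
  also have "\<dots> = f e1 + f e2" using e12 by simp
  finally show ?thesis .
qed

lemma vec2: "(x::real^'w) = y \<longleftrightarrow> x$e1 = y$e1 \<and> x$e2 = y$e2"
proof
  assume h: "x$e1 = y$e1 \<and> x$e2 = y$e2"
  show "x = y" unfolding vec_eq_iff
  proof
    fix i :: 'w
    have "i = e1 \<or> i = e2" using univ by blast
    then show "x$i = y$i" using h by auto
  qed
qed simp

lemma bel_iff: "p \<in> beliefs \<longleftrightarrow> 0 \<le> p$e1 \<and> 0 \<le> p$e2 \<and> p$e1 + p$e2 = 1"
proof -
  have "(\<forall>w. 0 \<le> p$w) \<longleftrightarrow> 0 \<le> p$e1 \<and> 0 \<le> p$e2"
  proof
    assume "0 \<le> p$e1 \<and> 0 \<le> p$e2"
    moreover have "\<And>w. w = e1 \<or> w = e2" using univ by blast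
    ultimately show "\<forall>w. 0 \<le> p$w" by metis
  qed simp
  then show ?thesis unfolding beliefs_def using sum2[of "\<lambda>w. p$w"] by auto
qed

lemma bel_pt: "p \<in> beliefs \<Longrightarrow> p = pt (p$e1)"
  unfolding vec2 by (auto simp: pt_def bel_iff e12 e12[symmetric])

lemma pt_bel: "0 \<le> y \<Longrightarrow> y \<le> 1 \<Longrightarrow> pt y \<in> beliefs"
  by (auto simp: bel_iff pt_def e12 e12[symmetric])

lemma pt_e1[simp]: "pt y $ e1 = y" by (simp add: pt_def)

lemma inv_iff: assumes "p \<in> beliefs" shows "p \<in> invest r \<longleftrightarrow> cc \<le> p$e1"
proof -
  have e: "p \<bullet> r = r$e2 + p$e1 * (r$e1 - r$e2)"
  proof -
    have h: "p$e2 = 1 - p$e1" using assms by (simp add: bel_iff)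
    show ?thesis unfolding inner_vec_def sum2 by (simp add: h algebra_simps)
  qed
  have x: "0 \<le> p$e1" "p$e1 \<le> 1" using assms by (auto simp: bel_iff)
  show ?thesis
  proof (cases "r$e1 = r$e2")
    case True then show ?thesis using assms x by (auto simp: invest_def e cc_def)
  next
    case False
    then have pos: "0 < r$e1 - r$e2" using r12 by simp
    have h1: "- (r$e2 / (r$e1 - r$e2)) \<le> p$e1 \<longleftrightarrow> - p$e1 \<le> r$e2 / (r$e1 - r$e2)" by linarith
    have h2: "- p$e1 \<le> r$e2 / (r$e1 - r$e2) \<longleftrightarrow> - p$e1 * (r$e1 - r$e2) \<le> r$e2"
      using pos by (simp add: le_divide_eq)
    have "0 \<le> r$e2 + p$e1 * (r$e1 - r$e2) \<longleftrightarrow> - r$e2 / (r$e1 - r$e2) \<le> p$e1"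
      using h1 h2 by (simp add: algebra_simps)
    then show ?thesis using assms False by (simp add: invest_def e cc_def)
  qed
qed

lemma phi_bel: assumes q: "q \<in> beliefs" shows "phi M q \<in> beliefs \<and> phi M q $ e1 = bt + lm * q$e1"
proof -
  have M: "\<And>i j. 0 \<le> M$i$j" "\<And>i. M$i$e1 + M$i$e2 = 1" using stoch unfolding stochastic_def sum2 by auto
  have q2: "q$e2 = 1 - q$e1" "0 \<le> q$e1" "0 \<le> q$e2" using q by (auto simp: bel_iff)
  have c1: "phi M q $ e1 = q$e1 * M$e1$e1 + q$e2 * M$e2$e1"
    unfolding phi_def vector_matrix_mult_def sum2 by simp
  have c2: "phi M q $ e2 = q$e1 * M$e1$e2 + q$e2 * M$e2$e2"
    unfolding phi_def vector_matrix_mult_def sum2 by simp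
  have "phi M q $ e1 + phi M q $ e2 = q$e1 * (M$e1$e1 + M$e1$e2) + q$e2 * (M$e2$e1 + M$e2$e2)"
    unfolding c1 c2 by (simp add: algebra_simps)
  also have "\<dots> = 1" using M q2 by simp
  finally have s: "phi M q $ e1 + phi M q $ e2 = 1" .
  have "0 \<le> phi M q $ e1" "0 \<le> phi M q $ e2" unfolding c1 c2 using M q2 by simp_all
  then have "phi M q \<in> beliefs" using s by (simp add: bel_iff)
  moreover have "phi M q $ e1 = bt + lm * q$e1" unfolding c1 q2(1) by (simp add: bt_def lm_def algebra_simps)
  ultimately show ?thesis by simp
qed

lemma params: "0 \<le> bt" "bt \<le> 1" "0 \<le> bt + lm" "bt + lm \<le> 1" "-1 \<le> lm" "lm \<le> 1"
proof -
  have M: "\<And>i j. 0 \<le> M$i$j" "\<And>i. M$i$e1 + M$i$e2 = 1" using stoch unfolding stochastic_def sum2 by auto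
  have a: "0 \<le> M$e1$e1" "0 \<le> M$e2$e1" "0 \<le> M$e1$e2" "0 \<le> M$e2$e2" using M(1) by auto
  have b: "M$e1$e1 + M$e1$e2 = 1" "M$e2$e1 + M$e2$e2 = 1" using M(2) by auto
  show "0 \<le> bt" "bt \<le> 1" "0 \<le> bt + lm" "bt + lm \<le> 1" "-1 \<le> lm" "lm \<le> 1"
    unfolding bt_def lm_def using a b by linarith+
qed

lemma cc1: "cc \<le> 1"
proof (rule ccontr)
  assume "\<not> cc \<le> 1"
  then have ni: "invest r = {}" using inv_iff by (force simp: invest_def bel_iff)
  have "pt 0 \<in> noinvest r" using pt_bel[of 0] ni by (simp add: noinvest_def)
  then have "G (pt 0) \<in> greedy_splittings r (pt 0)" using gc by (simp add: greedy_choice_def)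
  then show False using ni by (auto simp: greedy_splittings_def feasible_split_def)
qed


lemma x_bounds: "p \<in> beliefs \<Longrightarrow> 0 \<le> p$e1 \<and> p$e1 \<le> 1"
  by (auto simp: bel_iff)

lemma split_pt: assumes "0 < cc" shows "pt x = (x / cc) *\<^sub>R pt cc + (1 - x / cc) *\<^sub>R pt 0"
  unfolding vec2 using assms e12 by (auto simp: pt_def field_simps)

lemma G_form: assumes p: "p \<in> beliefs"
  shows "G p = (if cc \<le> p$e1 then two_point 1 p p else two_point (p$e1 / cc) (pt cc) (pt 0))"
proof (cases "cc \<le> p$e1")
  case True
  then have "p \<in> invest r" using inv_iff[OF p] by simp
  then have "G p = return borel p" using gc by (simp add: greedy_choice_def)
  then show ?thesis using True tp_return[of 1 p] by simp
next
  case False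
  define x where "x = p$e1"
  have x: "0 \<le> x" "x \<le> 1" "x < cc" using x_bounds[OF p] False by (auto simp: x_def)
  then have cpos: "0 < cc" by simp
  have "p \<in> noinvest r" using inv_iff[OF p] False p by (simp add: noinvest_def)
  then have "G p \<in> greedy_splittings r p" using gc by (simp add: greedy_choice_def)
  then obtain a qI qJ where Gp: "G p = two_point a qI qJ" and fs: "feasible_split r p a qI qJ"
    and mx: "\<And>a' qI' qJ'. feasible_split r p a' qI' qJ' \<Longrightarrow> a' \<le> a"
    unfolding greedy_splittings_def by blast
  have a: "0 \<le> a" "a \<le> 1" and qI: "qI \<in> invest r" and qJ: "qJ \<in> beliefs" and pe: "p = a *\<^sub>R qI + (1 - a) *\<^sub>R qJ"
    using fs by (auto simp: feasible_split_def)
  have qIb: "qI \<in> beliefs" using qI by (simp add: invest_def)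
  have qI1: "cc \<le> qI$e1" using inv_iff[OF qIb] qI by simp
  have qJ1: "0 \<le> qJ$e1" using x_bounds[OF qJ] by simp
  have pc: "pt cc \<in> invest r" using inv_iff[OF pt_bel[of cc]] cpos cc1 by simp
  have "feasible_split r p (x / cc) (pt cc) (pt 0)"
    unfolding feasible_split_def using x cpos pc pt_bel[of 0] split_pt[OF cpos, of x] bel_pt[OF p]
    by (auto simp: x_def)
  then have ge: "x / cc \<le> a" by (rule mx)
  have xe: "x = a * qI$e1 + (1 - a) * qJ$e1" using pe by (simp add: x_def)
  have t1: "a * cc \<le> a * qI$e1" using a qI1 by (intro mult_left_mono) auto
  have t2: "0 \<le> (1 - a) * qJ$e1" using a qJ1 by simp
  have "a * cc \<le> x" using xe t1 t2 by linarith
  then have "a \<le> x / cc" using cpos by (simp add: le_divide_eq)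
  then have ax: "a = x / cc" using ge by simp
  have ac: "a * cc = x" using ax cpos by simp
  have "a * (qI$e1 - cc) + (1 - a) * qJ$e1 = 0" using xe ac by (simp add: algebra_simps)
  moreover have "0 \<le> a * (qI$e1 - cc)" using a qI1 by simp
  ultimately have z1: "a * (qI$e1 - cc) = 0" and z2: "(1 - a) * qJ$e1 = 0" using t2 by linarith+
  have "a < 1" using ax x cpos by (simp add: divide_less_eq)
  then have "qJ$e1 = 0" using z2 by simp
  then have qJe: "qJ = pt 0" using bel_pt[OF qJ] by simp
  show ?thesis
  proof (cases "a = 0")
    case True
    have "G p = two_point 0 qI (pt 0)" using Gp qJe True by simp
    also have "\<dots> = two_point 0 (pt cc) (pt 0)" by (rule tp_zero)
    moreover have "p$e1 / cc = 0" using True ax by (simp add: x_def)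
    ultimately show ?thesis using False cpos by simp
  next
    case False
    then have "qI$e1 = cc" using z1 by simp
    then have "qI = pt cc" using bel_pt[OF qIb] by simp
    then show ?thesis using Gp qJe ax \<open>\<not> cc \<le> p$e1\<close> by (simp add: x_def)
  qed
qed

lemma G_split: assumes p: "p \<in> beliefs" shows "G p \<in> splittings p"
proof (cases "cc \<le> p$e1")
  case True
  have id: "(\<lambda>q::real^'w. q) \<in> borel_measurable borel" by simp
  have "emeasure (two_point 1 p p) beliefs = 1" using p by (simp add: tp_emeasure)
  then show ?thesis using True tp_int[of 1 "\<lambda>q. q" p p, OF _ _ id] tp_prob
    by (simp add: G_form[OF p] splittings_def)
next
  case False
  define x where "x = p$e1"
  have x: "0 \<le> x" "x \<le> 1" "x < cc" using x_bounds[OF p] False by (auto simp: x_def)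
  then have cpos: "0 < cc" by simp
  have a: "0 \<le> x / cc" "x / cc \<le> 1" using x cpos by auto
  have id: "(\<lambda>q::real^'w. q) \<in> borel_measurable borel" by simp
  have b: "pt cc \<in> beliefs" "pt 0 \<in> beliefs" using pt_bel[of cc] pt_bel[of 0] cpos cc1 by auto
  have "emeasure (two_point (x / cc) (pt cc) (pt 0)) beliefs = ennreal (x / cc) + ennreal (1 - x / cc)"
    using a b by (simp add: tp_emeasure)
  also have "\<dots> = 1" using a by (simp add: ennreal_plus[symmetric] del: ennreal_plus)
  finally have e: "emeasure (two_point (x / cc) (pt cc) (pt 0)) beliefs = 1" .
  have "p = (x / cc) *\<^sub>R pt cc + (1 - x / cc) *\<^sub>R pt 0" using split_pt[OF cpos, of x] bel_pt[OF p] by (simp add: x_def)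
  then show ?thesis using False e tp_int[OF a id, of "pt cc" "pt 0"] tp_prob
    by (simp add: G_form[OF p] splittings_def x_def)
qed

definition "Kf p = (if p \<in> beliefs then G p else return borel p)"

lemma Kf_meas: "Kf \<in> borel \<rightarrow>\<^sub>M subprob_algebra borel"
proof (rule measurable_subprob_algebra)
  fix p :: "real^'w" assume "p \<in> space borel"
  show "subprob_space (Kf p)"
    using G_split[of p] by (auto simp: Kf_def splittings_def prob_space_imp_subprob_space subprob_space_return)
  show "sets (Kf p) = sets borel" using G_split[of p] by (auto simp: Kf_def splittings_def)
next
  fix A :: "(real^'w) set" assume A: "A \<in> sets borel"
  define E where "E p = (if p \<in> beliefs \<and> \<not> cc \<le> p$e1 then ennreal (p$e1 / cc) * indicator A (pt cc) + ennreal (1 - p$e1 / cc) * indicator A (pt 0) else indicator A p)" for p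
  have "emeasure (Kf p) A = E p" for p
  proof (cases "p \<in> beliefs")
    case True
    show ?thesis
    proof (cases "cc \<le> p$e1")
      case True
      then show ?thesis using \<open>p \<in> beliefs\<close> A by (simp add: Kf_def E_def G_form tp_emeasure)
    next
      case False
      have x: "0 \<le> p$e1" "p$e1 < cc" using x_bounds[OF \<open>p \<in> beliefs\<close>] False by auto
      then have "0 \<le> p$e1 / cc" "p$e1 / cc \<le> 1" by auto
      then show ?thesis using \<open>p \<in> beliefs\<close> False A by (simp add: Kf_def E_def G_form tp_emeasure)
    qed
  next
    case False
    then show ?thesis using A by (simp add: Kf_def E_def emeasure_return)
  qed
  moreover have "E \<in> borel_measurable borel" unfolding E_def using A by measurable
  ultimately show "(\<lambda>p. emeasure (Kf p) A) \<in> borel_measurable borel" by simp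
qed

lemma belief_bel: "p1 \<in> beliefs \<Longrightarrow> (\<And>i. i < n \<Longrightarrow> h i \<in> beliefs) \<Longrightarrow> belief M p1 n h \<in> beliefs"
  by (cases n) (auto simp: belief_def phi_bel)

lemma greedy_Kf: "greedy_strategy M G p1 n h = Kf (belief M p1 n h)"
  by (simp add: greedy_strategy_def Kf_def Let_def)

lemma greedy_is_strategy: assumes p1: "p1 \<in> beliefs" shows "is_strategy M p1 (greedy_strategy M G p1)"
  unfolding is_strategy_def
proof (intro conjI allI impI)
  fix n
  show "greedy_strategy M G p1 n \<in> hist_space n \<rightarrow>\<^sub>M subprob_algebra borel"
  proof (cases n)
    case 0
    have "Kf p1 \<in> space (subprob_algebra borel)" using Kf_meas by (rule measurable_space) simp
    moreover have "greedy_strategy M G p1 n = (\<lambda>h. Kf p1)" using 0 by (auto simp: greedy_Kf belief_def)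
    ultimately show ?thesis by simp
  next
    case (Suc m)
    have "(\<lambda>h. h m) \<in> hist_space (Suc m) \<rightarrow>\<^sub>M borel"
      using measurable_component_singleton[of m "{..<Suc m}" "\<lambda>_. borel"] by simp
    then have "(\<lambda>h. phi M (h m)) \<in> hist_space (Suc m) \<rightarrow>\<^sub>M borel" by measurable
    then have "(\<lambda>h. Kf (phi M (h m))) \<in> hist_space (Suc m) \<rightarrow>\<^sub>M subprob_algebra borel"
      using Kf_meas by (rule measurable_compose)
    moreover have "greedy_strategy M G p1 n = (\<lambda>h. Kf (phi M (h m)))" using Suc by (auto simp: greedy_Kf belief_def)
    ultimately show ?thesis using Suc by simp
  qed
next
  fix n and h :: "nat \<Rightarrow> real^'w" assume h: "h \<in> space (hist_space n) \<and> (\<forall>i<n. h i \<in> beliefs)"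
  then have b: "belief M p1 n h \<in> beliefs" using belief_bel[OF p1] by blast
  then show "greedy_strategy M G p1 n h \<in> splittings (belief M p1 n h)"
    using G_split[OF b] by (simp add: greedy_Kf Kf_def)
qed

end


lemma small_pow: fixes d s e :: real assumes "0 \<le> d" "d < 1" "0 < e" shows "\<exists>k. s * d ^ k < e"
proof -
  have "(\<lambda>k. s * d ^ k) \<longlonglongrightarrow> s * 0" using assms by (intro tendsto_intros LIMSEQ_power_zero) auto
  then have "\<forall>\<^sub>F k in sequentially. s * d ^ k < e" using assms by (intro order_tendstoD) auto
  then show ?thesis by (meson eventually_sequentially order_refl)
qed

context vs begin

lemma gr1_inst: "gr1 bt lm cc dl"
  using params cc1 d0 d1 by unfold_locales auto

abbreviation "W \<equiv> Wl bt lm cc dl"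

lemma KL:
  assumes p: "p \<in> beliefs" and mu: "\<mu> \<in> splittings p" and s: "0 \<le> s"
    and F: "\<And>q. q \<in> beliefs \<Longrightarrow> F q \<le> ennreal (s * W (q$e1))"
  shows "(\<integral>\<^sup>+ q. F q \<partial>\<mu>) \<le> ennreal (s * W (p$e1))"
proof -
  have ps: "prob_space \<mu>" and sb: "sets \<mu> = sets borel" and eb: "emeasure \<mu> beliefs = 1"
    and ii: "integrable \<mu> (\<lambda>q. q)" and ie: "integral\<^sup>L \<mu> (\<lambda>q. q) = p"
    using mu by (auto simp: splittings_def)
  interpret prob_space \<mu> by (rule ps)
  have "Sigma_Algebra.measure \<mu> beliefs = 1" using eb by (simp add: measure_def)
  then have AE: "AE q in \<mu>. q \<in> beliefs" by (rule AE_prob_1)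
  have i1: "integrable \<mu> (\<lambda>q. q$e1)" using integrable_bounded_linear[OF bounded_linear_vec_nth ii] .
  have i1e: "integral\<^sup>L \<mu> (\<lambda>q. q$e1) = p$e1"
    using integral_bounded_linear[OF bounded_linear_vec_nth ii] ie by simp
  define x where "x = p$e1"
  have x: "0 \<le> x" "x \<le> 1" using x_bounds[OF p] by (auto simp: x_def)
  have Wx: "0 \<le> W x" using gr1.Wl_bounds[OF gr1_inst x] by simp
  have step: "(\<integral>\<^sup>+ q. F q \<partial>\<mu>) \<le> ennreal (s * W x) + ennreal (s * dl ^ k)" for k
  proof -
    obtain m where m: "\<And>y. 0 \<le> y \<and> y \<le> 1 \<Longrightarrow> W y \<le> W x + m * (y - x) + dl ^ k"
      using gr1.Wl_aSG[OF gr1_inst x, of k] by blast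
    define g where "g q = s * (W x - m * x + dl ^ k) + (s * m) * q$e1" for q :: "real^'w"
    have gq: "s * W (q$e1) \<le> g q" if "q \<in> beliefs" for q
    proof -
      have "W (q$e1) \<le> W x + m * (q$e1 - x) + dl ^ k" using m x_bounds[OF that] by blast
      then have "s * W (q$e1) \<le> s * (W x + m * (q$e1 - x) + dl ^ k)" using s by (rule mult_left_mono)
      then show ?thesis by (simp add: g_def algebra_simps)
    qed
    have Wq0: "0 \<le> s * W (q$e1)" if "q \<in> beliefs" for q
      using gr1.Wl_bounds[OF gr1_inst] x_bounds[OF that] s by simp
    have Fg: "F q \<le> ennreal (g q)" if "q \<in> beliefs" for q
    proof -
      have "F q \<le> ennreal (s * W (q$e1))" using F[OF that] .
      also have "\<dots> \<le> ennreal (g q)" using gq[OF that] by (rule ennreal_leI)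
      finally show ?thesis .
    qed
    have "AE q in \<mu>. F q \<le> ennreal (g q)"
      using AE by eventually_elim (rule Fg)
    then have "(\<integral>\<^sup>+ q. F q \<partial>\<mu>) \<le> (\<integral>\<^sup>+ q. ennreal (g q) \<partial>\<mu>)" by (rule nn_integral_mono_AE)
    also have "\<dots> = ennreal (integral\<^sup>L \<mu> g)"
    proof (rule nn_integral_eq_integral)
      show "integrable \<mu> g" unfolding g_def
        by (intro Bochner_Integration.integrable_add Bochner_Integration.integrable_mult_right i1 integrable_const)
      show "AE q in \<mu>. 0 \<le> g q" using AE by eventually_elim (use gq Wq0 in fastforce)
    qed
    also have "integral\<^sup>L \<mu> g = s * (W x - m * x + dl ^ k) + (s * m) * x"
    proof -
      have "integral\<^sup>L \<mu> g = integral\<^sup>L \<mu> (\<lambda>q. s * (W x - m * x + dl ^ k)) + integral\<^sup>L \<mu> (\<lambda>q. (s * m) * q$e1)"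
        unfolding g_def
        by (rule Bochner_Integration.integral_add) (intro Bochner_Integration.integrable_mult_right i1 integrable_const)+
      also have "integral\<^sup>L \<mu> (\<lambda>q. s * (W x - m * x + dl ^ k)) = s * (W x - m * x + dl ^ k)"
        by (simp add: lebesgue_integral_const prob_space)
      also have "integral\<^sup>L \<mu> (\<lambda>q. (s * m) * q$e1) = (s * m) * x"
        using i1e by (simp add: integral_mult_right_zero x_def)
      finally show ?thesis .
    qed
    also have "\<dots> = s * W x + s * dl ^ k" by (simp add: algebra_simps)
    also have "ennreal (s * W x + s * dl ^ k) = ennreal (s * W x) + ennreal (s * dl ^ k)"
      by (rule ennreal_plus) (use Wx s d0 in auto)
    finally show ?thesis .
  qed
  show ?thesis
  proof (rule ennreal_le_epsilon)
    fix e :: real assume "0 < e"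
    then obtain k where k: "s * dl ^ k < e" using small_pow[OF d0 d1] by blast
    have "(\<integral>\<^sup>+ q. F q \<partial>\<mu>) \<le> ennreal (s * W x) + ennreal (s * dl ^ k)" by (rule step)
    also have "\<dots> \<le> ennreal (s * W x) + ennreal e" using k by (intro add_left_mono ennreal_leI) simp
    finally show "(\<integral>\<^sup>+ q. F q \<partial>\<mu>) \<le> ennreal (s * W (p$e1)) + ennreal e" by (simp add: x_def)
  qed
qed


lemma hist_upd: "h \<in> space (hist_space n) \<Longrightarrow> h(n := q) \<in> space (hist_space (Suc n))"
  by (auto simp: space_PiM lessThan_Suc intro!: PiE_fun_upd)

lemma belief_upd: "belief M p1 (Suc n) (h(n := q)) = phi M q"
  by (simp add: belief_def)

lemma UB:
  assumes p1: "p1 \<in> beliefs" and sg: "is_strategy M p1 \<sigma>"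
  shows "h \<in> space (hist_space n) \<Longrightarrow> (\<forall>i<n. h i \<in> beliefs) \<Longrightarrow>
    Wfin r dl \<sigma> N n h \<le> ennreal (dl ^ n * W ((belief M p1 n h)$e1))"
proof (induction N arbitrary: n h)
  case 0 then show ?case by simp
next
  case (Suc N)
  define p where "p = belief M p1 n h"
  have pb: "p \<in> beliefs" using belief_bel[OF p1] Suc.prems by (auto simp: p_def)
  have mu: "\<sigma> n h \<in> splittings p" using sg Suc.prems by (auto simp: is_strategy_def p_def)
  have "(\<integral>\<^sup>+ q. ennreal ((1 - dl) * dl ^ n) * indicator (invest r) q + Wfin r dl \<sigma> N (Suc n) (h(n := q)) \<partial>\<sigma> n h)
      \<le> ennreal (dl ^ n * W (p$e1))"
  proof (rule KL[OF pb mu])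
    show "0 \<le> dl ^ n" using d0 by simp
    fix q :: "real^'w" assume qb: "q \<in> beliefs"
    have pre: "\<forall>i<Suc n. (h(n := q)) i \<in> beliefs" using Suc.prems qb by (auto simp: less_Suc_eq)
    have hs: "h(n := q) \<in> space (hist_space (Suc n))" using hist_upd Suc.prems by blast
    have ih: "Wfin r dl \<sigma> N (Suc n) (h(n := q)) \<le> ennreal (dl ^ Suc n * W ((phi M q)$e1))"
      using Suc.IH[OF hs pre] unfolding belief_upd .
    have ph: "(phi M q)$e1 = bt + lm * q$e1" using phi_bel[OF qb] by simp
    have xq: "0 \<le> q$e1" "q$e1 \<le> 1" using x_bounds[OF qb] by auto
    have W0: "0 \<le> W (bt + lm * q$e1)" using gr1.Wl_bounds[OF gr1_inst] gr1.phi_in[OF gr1_inst xq] by simp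
    have bell: "(if cc \<le> q$e1 then 1 - dl else 0) + dl * W (bt + lm * q$e1) \<le> W (q$e1)"
      using gr1.Wl_bell[OF gr1_inst xq] .
    have ind: "ennreal ((1 - dl) * dl ^ n) * indicator (invest r) q = ennreal (dl ^ n * (if cc \<le> q$e1 then 1 - dl else 0))"
      using inv_iff[OF qb] by (auto simp: mult.commute)
    have "ennreal ((1 - dl) * dl ^ n) * indicator (invest r) q + Wfin r dl \<sigma> N (Suc n) (h(n := q))
        \<le> ennreal (dl ^ n * (if cc \<le> q$e1 then 1 - dl else 0)) + ennreal (dl ^ Suc n * W (bt + lm * q$e1))"
      using ih ph ind by (intro add_mono) auto
    also have "\<dots> = ennreal (dl ^ n * ((if cc \<le> q$e1 then 1 - dl else 0) + dl * W (bt + lm * q$e1)))"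
      using d0 d1 W0 by (subst ennreal_plus[symmetric]) (auto simp: algebra_simps)
    also have "\<dots> \<le> ennreal (dl ^ n * W (q$e1))"
      using bell d0 by (intro ennreal_leI mult_left_mono) auto
    finally show "ennreal ((1 - dl) * dl ^ n) * indicator (invest r) q + Wfin r dl \<sigma> N (Suc n) (h(n := q))
        \<le> ennreal (dl ^ n * W (q$e1))" .
  qed
  then show ?case by (simp add: p_def)
qed

abbreviation "Wn' \<equiv> Wn bt lm cc dl"

lemma GV:
  assumes p1: "p1 \<in> beliefs"
  shows "(\<forall>i<n. h i \<in> beliefs) \<Longrightarrow>
    Wfin r dl (greedy_strategy M G p1) N n h = ennreal (dl ^ n * Wn' N ((belief M p1 n h)$e1))"
proof (induction N arbitrary: n h)
  case 0 then show ?case by simp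
next
  case (Suc N)
  define p where "p = belief M p1 n h"
  have pb: "p \<in> beliefs" using belief_bel[OF p1] Suc.prems by (auto simp: p_def)
  define F where "F q = ennreal ((1 - dl) * dl ^ n) * indicator (invest r) q + Wfin r dl (greedy_strategy M G p1) N (Suc n) (h(n := q))" for q
  have Fq: "F q = ennreal (dl ^ n * ((if cc \<le> q$e1 then 1 - dl else 0) + dl * Wn' N (bt + lm * q$e1)))"
    if qb: "q \<in> beliefs" for q
  proof -
    have pre: "\<forall>i<Suc n. (h(n := q)) i \<in> beliefs" using Suc.prems qb by (auto simp: less_Suc_eq)
    have ih: "Wfin r dl (greedy_strategy M G p1) N (Suc n) (h(n := q)) = ennreal (dl ^ Suc n * Wn' N ((phi M q)$e1))"
      using Suc.IH[OF pre] unfolding belief_upd .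
    have ph: "(phi M q)$e1 = bt + lm * q$e1" using phi_bel[OF qb] by simp
    have xq: "0 \<le> q$e1" "q$e1 \<le> 1" using x_bounds[OF qb] by auto
    have W0: "0 \<le> Wn' N (bt + lm * q$e1)" using gr1.Wn_bounds[OF gr1_inst] gr1.phi_in[OF gr1_inst xq] by simp
    have ind: "ennreal ((1 - dl) * dl ^ n) * indicator (invest r) q = ennreal (dl ^ n * (if cc \<le> q$e1 then 1 - dl else 0))"
      using inv_iff[OF qb] by (auto simp: mult.commute)
    have "F q = ennreal (dl ^ n * (if cc \<le> q$e1 then 1 - dl else 0)) + ennreal (dl ^ Suc n * Wn' N (bt + lm * q$e1))"
      unfolding F_def ih ph ind ..
    also have "\<dots> = ennreal (dl ^ n * ((if cc \<le> q$e1 then 1 - dl else 0) + dl * Wn' N (bt + lm * q$e1)))"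
      using d0 d1 W0 by (subst ennreal_plus[symmetric]) (auto simp: algebra_simps)
    finally show ?thesis .
  qed
  have "Wfin r dl (greedy_strategy M G p1) (Suc N) n h = (\<integral>\<^sup>+ q. F q \<partial>G p)"
    using pb by (simp add: F_def greedy_Kf Kf_def p_def)
  also have "\<dots> = ennreal (dl ^ n * Wn' (Suc N) (p$e1))"
  proof (cases "cc \<le> p$e1")
    case True
    have "(\<integral>\<^sup>+ q. F q \<partial>G p) = F p" using pb True by (simp add: G_form tp_nn)
    also have "\<dots> = ennreal (dl ^ n * Wn' (Suc N) (p$e1))" using Fq[OF pb] True by (simp add: Gop_def)
    finally show ?thesis .
  next
    case False
    define x where "x = p$e1"
    have x: "0 \<le> x" "x \<le> 1" "x < cc" using x_bounds[OF pb] False by (auto simp: x_def)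
    then have cpos: "0 < cc" by simp
    have a: "0 \<le> x / cc" "x / cc \<le> 1" using x cpos by auto
    have b: "pt cc \<in> beliefs" "pt 0 \<in> beliefs" using pt_bel[of cc] pt_bel[of 0] cpos cc1 by auto
    define u1 where "u1 = dl ^ n * ((1 - dl) + dl * Wn' N (bt + lm * cc))"
    define u0 where "u0 = dl ^ n * (dl * Wn' N bt)"
    have F1: "F (pt cc) = ennreal u1" using Fq[OF b(1)] by (simp add: u1_def)
    have F0: "F (pt 0) = ennreal u0" using Fq[OF b(2)] cpos by (simp add: u0_def)
    have xb: "0 \<le> bt + lm * cc" "bt + lm * cc \<le> 1" using gr1.phi_in[OF gr1_inst, of cc] cpos cc1 by auto
    have u1p: "0 \<le> u1" unfolding u1_def using d0 d1 gr1.Wn_bounds[OF gr1_inst xb(1) xb(2)] by simp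
    have u0p: "0 \<le> u0" unfolding u0_def using d0 gr1.Wn_bounds[OF gr1_inst, of bt] params by simp
    have "(\<integral>\<^sup>+ q. F q \<partial>G p) = ennreal (x / cc) * F (pt cc) + ennreal (1 - x / cc) * F (pt 0)"
      using pb False a by (simp add: G_form tp_nn x_def)
    also have "\<dots> = ennreal ((x / cc) * u1 + (1 - x / cc) * u0)"
    proof -
      have e1: "ennreal ((x / cc) * u1) = ennreal (x / cc) * ennreal u1" by (rule ennreal_mult) (use a u1p in auto)
      have e2: "ennreal ((1 - x / cc) * u0) = ennreal (1 - x / cc) * ennreal u0" by (rule ennreal_mult) (use a u0p in auto)
      have n1: "0 \<le> (x / cc) * u1" by (rule mult_nonneg_nonneg) (use a u1p in auto)
      have n2: "0 \<le> (1 - x / cc) * u0" by (rule mult_nonneg_nonneg) (use a u0p in auto)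
      have "ennreal ((x / cc) * u1 + (1 - x / cc) * u0) = ennreal ((x / cc) * u1) + ennreal ((1 - x / cc) * u0)"
        by (rule ennreal_plus[OF n1 n2])
      then show ?thesis unfolding F1 F0 e1 e2 by simp
    qed
    also have "(x / cc) * u1 + (1 - x / cc) * u0 = dl ^ n * Wn' (Suc N) x"
      using x by (simp add: Gop_def u1_def u0_def algebra_simps)
    finally show ?thesis by (simp add: x_def)
  qed
  finally show ?case by (simp add: p_def)
qed

lemma main:
  assumes p1: "p1 \<in> beliefs"
  shows "is_strategy M p1 (greedy_strategy M G p1) \<and> payoff r dl (greedy_strategy M G p1) = value_fn M r dl p1"
proof -
  define x where "x = p1$e1"
  have x: "0 \<le> x" "x \<le> 1" using x_bounds[OF p1] by (auto simp: x_def)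
  have gs: "is_strategy M p1 (greedy_strategy M G p1)" by (rule greedy_is_strategy[OF p1])
  have pg: "payoff r dl (greedy_strategy M G p1) = (SUP N. ennreal (Wn' N x))"
    unfolding payoff_def using GV[OF p1, of 0] by (simp add: belief_def x_def)
  have eq: "(SUP N. ennreal (Wn' N x)) = ennreal (W x)"
  proof (rule antisym)
    show "(SUP N. ennreal (Wn' N x)) \<le> ennreal (W x)"
      using gr1.Wl_ge[OF gr1_inst x] by (intro SUP_least ennreal_leI) auto
    show "ennreal (W x) \<le> (SUP N. ennreal (Wn' N x))"
    proof (rule ennreal_le_epsilon)
      fix e :: real assume "0 < e"
      then obtain k where k: "1 * dl ^ k < e" using small_pow[OF d0 d1] by blast
      have W0: "0 \<le> Wn' k x" using gr1.Wn_bounds[OF gr1_inst x] by simp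
      have "ennreal (W x) \<le> ennreal (Wn' k x + dl ^ k)" using gr1.Wl_le[OF gr1_inst x, of k] by (rule ennreal_leI)
      also have "\<dots> = ennreal (Wn' k x) + ennreal (dl ^ k)" using W0 d0 by (intro ennreal_plus) auto
      also have "\<dots> \<le> (SUP N. ennreal (Wn' N x)) + ennreal e"
        using k by (intro add_mono SUP_upper ennreal_leI) auto
      finally show "ennreal (W x) \<le> (SUP N. ennreal (Wn' N x)) + ennreal e" .
    qed
  qed
  have ub: "payoff r dl \<sigma> \<le> ennreal (W x)" if "is_strategy M p1 \<sigma>" for \<sigma>
    unfolding payoff_def
  proof (rule SUP_least)
    fix N
    have "(\<lambda>_. undefined) \<in> space (hist_space 0 :: (nat \<Rightarrow> real^'w) measure)" by (simp add: space_PiM_empty)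
    then show "Wfin r dl \<sigma> N 0 (\<lambda>_. undefined) \<le> ennreal (W x)"
      using UB[OF p1 that, of "\<lambda>_. undefined" 0 N] by (simp add: belief_def x_def)
  qed
  have "value_fn M r dl p1 = payoff r dl (greedy_strategy M G p1)"
    unfolding value_fn_def
  proof (rule antisym)
    show "(SUP \<sigma>\<in>{\<sigma>. is_strategy M p1 \<sigma>}. payoff r dl \<sigma>) \<le> payoff r dl (greedy_strategy M G p1)"
      using ub pg eq by (intro SUP_least) auto
    show "payoff r dl (greedy_strategy M G p1) \<le> (SUP \<sigma>\<in>{\<sigma>. is_strategy M p1 \<sigma>}. payoff r dl \<sigma>)"
      using gs by (intro SUP_upper) auto
  qed
  then show ?thesis using gs by simp
qed

end

theorem theorem1:
  fixes M :: "real^'w::finite^'w" and r :: "real^'w" and \<delta> :: real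
    and G :: "real^'w \<Rightarrow> (real^'w) measure"
  assumes "CARD('w) = 2"
    and "stochastic M" and "irreducible M"
    and "0 \<le> \<delta>" and "\<delta> < 1"
    and "greedy_choice r G"
  shows "\<forall>p1 \<in> beliefs. is_strategy M p1 (greedy_strategy M G p1)
           \<and> payoff r \<delta> (greedy_strategy M G p1) = value_fn M r \<delta> p1"
proof -
  obtain a b :: 'w where ab: "(UNIV :: 'w set) = {a, b}" "a \<noteq> b"
    using assms(1) card_2_iff[of "UNIV :: 'w set"] by auto
  obtain e1 e2 :: 'w where e: "e1 \<noteq> e2" "(UNIV :: 'w set) = {e1, e2}" "r$e2 \<le> r$e1"
  proof (cases "r$b \<le> r$a")
    case True then show ?thesis using that ab by blast
  next
    case False then show ?thesis using that[of b a] ab by (auto simp: insert_commute)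
  qed
  interpret vs M r \<delta> G e1 e2
    using e assms by unfold_locales auto
  show ?thesis using main by blast
qed

end
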